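(* Let $\mathbf{\Omega} \in \mathbb{R}^{p \times p}$ be symmetric positive definite, $\mathbf{x} \in \mathbb{R}^p$ and $\epsilon > 0$, and consider $$\sup_{\mathbf{\Delta} \in \mathbb{R}^p,\ \|\mathbf{\Delta}\|_2 \leq \epsilon} (\mathbf{x} + \mathbf{\Delta})^{\intercal}\mathbf{\Omega}(\mathbf{x} + \mathbf{\Delta}).$$ Let $\mu^{\star} \in \mathbb{R}$ be an optimal solution of the one-dimensional problem $$\max_{\mu}\ -\tfrac{1}{2}\mathbf{x}^{\intercal}\mathbf{\Omega}(\mu\mathbf{I} - \mathbf{\Omega})^{-1}\mathbf{\Omega}\mathbf{x} - \tfrac{\mu\epsilon^2}{2} \quad \text{subject to } \mu\mathbf{I} - \mathbf{\Omega} \succeq 0,$$ with $\mu^{\star}\mathbf{I} - \mathbf{\Omega}$ invertible. Then $\mathbf{\Delta}^{\star} = (\mu^{\star}\mathbf{I} - \mathbf{\Omega})^{-1}\mathbf{\Omega}\mathbf{x}$ is an optimal solution of the first problem.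
   Context: $\mathbf{I}$ is the $p \times p$ identity and $\succeq 0$ denotes positive semidefiniteness. *)

theory Defs
  imports "HOL-Analysis.Analysis"
begin

definition psd_mat :: "real^'n^'n \<Rightarrow> bool" where
  "psd_mat A \<longleftrightarrow> (\<forall>v. 0 \<le> v \<bullet> (A *v v))"

definition pd_mat :: "real^'n^'n \<Rightarrow> bool" where
  "pd_mat A \<longleftrightarrow> (\<forall>v. v \<noteq> 0 \<longrightarrow> 0 < v \<bullet> (A *v v))"

definition quad_obj :: "real^'n^'n \<Rightarrow> real^'n \<Rightarrow> real^'n \<Rightarrow> real" where
  "quad_obj \<Omega> x \<Delta> = (x + \<Delta>) \<bullet> (\<Omega> *v (x + \<Delta>))"

definition dual_obj :: "real^'n^'n \<Rightarrow> real^'n \<Rightarrow> real \<Rightarrow> real \<Rightarrow> real" where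
  "dual_obj \<Omega> x \<epsilon> \<mu> =
     - (1/2) * (x \<bullet> (\<Omega> *v (matrix_inv (mat \<mu> - \<Omega>) *v (\<Omega> *v x)))) - \<mu> * \<epsilon>\<^sup>2 / 2"

end

theory Submission
  imports Defs
begin

lemma mat_mv: "mat m *v (v::real^'n) = m *\<^sub>R v"
proof -
  have "(\<Sum>j\<in>UNIV. (if i = j then m else 0) * v $ j) = m * v $ i" for i
  proof -
    have "(\<Sum>j\<in>UNIV. (if i = j then m else 0) * v $ j) = (\<Sum>j\<in>UNIV. if i = j then m * v $ j else 0)"
      by (rule sum.cong) auto
    then show ?thesis by simp
  qed
  then show ?thesis by (simp add: vec_eq_iff matrix_vector_mult_def mat_def)
qed

lemma pd_bound:
  fixes A :: "real^'n^'n"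
  assumes symA: "\<And>u v. u \<bullet> (A *v v) = (A *v u) \<bullet> v"
    and psd: "\<And>v. 0 \<le> v \<bullet> (A *v v)" and inv: "invertible A"
  shows "\<exists>c>0. \<forall>v. c * (v \<bullet> v) \<le> v \<bullet> (A *v v)"
proof -
  define h where "h = (\<lambda>v. v \<bullet> (A *v v))"
  have hsc: "h (a *\<^sub>R v) = a^2 * h v" for a v
    by (simp add: h_def matrix_vector_mult_scaleR power2_eq_square)
  have hexp: "h (v - s *\<^sub>R w) = h v - 2 * s * (w \<bullet> (A *v v)) + s^2 * h w" for v w s
  proof -
    have "h (v - s *\<^sub>R w) = h v - s * (v \<bullet> (A *v w)) - s * (w \<bullet> (A *v v)) + s * s * h w"
      by (simp add: h_def matrix_vector_mult_diff_distrib matrix_vector_mult_scaleR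
          inner_diff_left inner_diff_right algebra_simps)
    moreover have "v \<bullet> (A *v w) = w \<bullet> (A *v v)" using symA inner_commute by metis
    ultimately show ?thesis by (simp add: power2_eq_square)
  qed
  have strict: "h v > 0" if "v \<noteq> 0" for v
  proof (rule ccontr)
    assume "\<not> h v > 0"
    moreover have "h v \<ge> 0" using psd h_def by simp
    ultimately have hv: "h v = 0" by linarith
    define w where "w = A *v v"
    have "w \<noteq> 0" using inj_matrix_vector_mult[OF inv] that unfolding w_def
      by (metis injD matrix_vector_mult_0_right)
    then have ww: "w \<bullet> w > 0" by simp
    have hw: "h w \<ge> 0" using psd h_def by simp
    define s where "s = (w \<bullet> w) / (h w + 1)"
    have sp: "s > 0" using ww hw by (simp add: s_def)
    have "0 \<le> h (v - s *\<^sub>R w)" using psd h_def by simp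
    also have "\<dots> = s * (s * h w - 2 * (w \<bullet> w))" using hexp hv w_def
      by (simp add: algebra_simps power2_eq_square)
    finally have "0 \<le> s * h w - 2 * (w \<bullet> w)" using sp by (simp add: zero_le_mult_iff)
    moreover have "s * h w < w \<bullet> w"
    proof -
      have "s * h w = (w \<bullet> w) * (h w / (h w + 1))" by (simp add: s_def)
      also have "\<dots> < (w \<bullet> w) * 1" using ww hw by (intro mult_strict_left_mono) auto
      finally show ?thesis by simp
    qed
    ultimately show False using ww by linarith
  qed
  have cont: "continuous_on (sphere (0::real^'n) 1) h"
    unfolding h_def by (intro continuous_intros bounded_linear.continuous_on[OF matrix_vector_mul_bounded_linear])
  have ne: "sphere (0::real^'n) 1 \<noteq> {}" by simp
  obtain v0 where v0: "v0 \<in> sphere 0 1" and mn: "\<And>y. y \<in> sphere 0 1 \<Longrightarrow> h v0 \<le> h y"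
    using continuous_attains_inf[OF compact_sphere ne cont] by blast
  have "v0 \<noteq> 0" using v0 by auto
  then have cpos: "h v0 > 0" using strict by blast
  have "h v0 * (v \<bullet> v) \<le> h v" for v
  proof (cases "v = 0")
    case True then show ?thesis by (simp add: h_def)
  next
    case False
    define u where "u = (1 / norm v) *\<^sub>R v"
    have u: "u \<in> sphere 0 1" using False by (simp add: u_def)
    have vu: "v = norm v *\<^sub>R u" using False by (simp add: u_def)
    have "h v = (norm v)^2 * h u" using hsc vu by metis
    moreover have "v \<bullet> v = (norm v)^2" by (simp add: power2_norm_eq_inner)
    ultimately show ?thesis using mult_right_mono[OF mn[OF u], of "(norm v)^2"] by (simp add: mult.commute)
  qed
  then show ?thesis using cpos unfolding h_def by blast
qed

lemma real_zero:
  fixes E K c :: real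
  assumes c: "c > 0" and K: "K \<ge> 0"
    and H: "\<And>s. s \<noteq> 0 \<Longrightarrow> \<bar>s\<bar> \<le> c \<Longrightarrow> \<exists>k. \<bar>k\<bar> \<le> K \<and> s * (E - s * k) \<le> 0"
  shows "E = 0"
proof (rule ccontr)
  assume "E \<noteq> 0"
  define t where "t = min c (\<bar>E\<bar> / (2*K+1))"
  have tc: "t \<le> c" by (simp add: t_def)
  have tp: "t > 0" using c K \<open>E \<noteq> 0\<close> by (simp add: t_def)
  have "t \<le> \<bar>E\<bar> / (2*K+1)" by (simp add: t_def)
  then have tle: "t * (2*K+1) \<le> \<bar>E\<bar>" using K by (simp add: pos_le_divide_eq)
  have tK: "t * (2*K+1) = 2*(t*K) + t" by (simp add: algebra_simps)
  have tK0: "t * K \<ge> 0" using tp K by simp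
  show False
  proof (cases "E > 0")
    case True
    obtain k where k: "\<bar>k\<bar> \<le> K" "t * (E - t * k) \<le> 0" using H[of t] tp tc by auto
    have "E - t * k \<le> 0" using k(2) tp by (simp add: mult_le_0_iff)
    moreover have "t * k \<le> t * K" using k(1) tp by (intro mult_left_mono) auto
    ultimately show False using tle tK tK0 True tp by linarith
  next
    case False
    then have En: "E < 0" using \<open>E \<noteq> 0\<close> by simp
    obtain k where k: "\<bar>k\<bar> \<le> K" "(-t) * (E - (-t) * k) \<le> 0" using H[of "-t"] tp tc by auto
    have "E + t * k \<ge> 0" using k(2) tp by (simp add: mult_le_0_iff zero_le_mult_iff)
    moreover have "t * k \<le> t * K" using k(1) tp by (intro mult_left_mono) auto
    ultimately show False using tle tK tK0 En tp by linarith
  qed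
qed


lemma sym_inner:
  fixes W :: "real^'n^'n"
  assumes "transpose W = W"
  shows "u \<bullet> (W *v v) = (W *v u) \<bullet> v"
proof -
  have "u \<bullet> (W *v v) = (u v* W) \<bullet> v" by (simp add: dot_lmul_matrix)
  also have "u v* W = transpose W *v u" by simp
  finally show ?thesis using assms by simp
qed

lemma inv_app:
  fixes A :: "real^'n^'n"
  assumes "invertible A"
  shows "A *v (matrix_inv A *v y) = y"
proof -
  have "A ** matrix_inv A = mat 1"
    using assms unfolding invertible_def matrix_inv_def by (metis (mono_tags, lifting) someI_ex)
  then show ?thesis by (simp add: matrix_vector_mul_assoc)
qed

lemma inj_invertible:
  fixes A :: "real^'n^'n"
  assumes "\<And>v. A *v v = 0 \<Longrightarrow> v = 0"
  shows "invertible A"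
proof -
  have "inj ((*v) A)"
    by (metis assms inj_on_def matrix_vector_mult_diff_distrib right_minus_eq)
  then show ?thesis
    using det_nz_iff_inj[of "(*v) A"] by (simp add: invertible_det_nz)
qed

theorem theorem5:
  fixes \<Omega> :: "real^'p^'p" and x :: "real^'p" and \<epsilon> \<mu>s :: real
  assumes "transpose \<Omega> = \<Omega>" and "pd_mat \<Omega>" and "\<epsilon> > 0"
    and "psd_mat (mat \<mu>s - \<Omega>)" and "invertible (mat \<mu>s - \<Omega>)"
    and "\<And>\<mu>. psd_mat (mat \<mu> - \<Omega>) \<Longrightarrow> invertible (mat \<mu> - \<Omega>) \<Longrightarrow>
           dual_obj \<Omega> x \<epsilon> \<mu> \<le> dual_obj \<Omega> x \<epsilon> \<mu>s"
  shows "norm (matrix_inv (mat \<mu>s - \<Omega>) *v (\<Omega> *v x)) \<le> \<epsilon> \<and>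
         (\<forall>\<Delta>. norm \<Delta> \<le> \<epsilon> \<longrightarrow>
            quad_obj \<Omega> x \<Delta> \<le> quad_obj \<Omega> x (matrix_inv (mat \<mu>s - \<Omega>) *v (\<Omega> *v x)))"
proof -
  define b where "b = \<Omega> *v x"
  define D where "D = (\<lambda>m. matrix_inv (mat m - \<Omega>) *v b)"
  have Mv: "\<And>m v. (mat m - \<Omega>) *v v = m *\<^sub>R v - \<Omega> *v v"
    by (simp add: matrix_vector_mult_diff_rdistrib mat_mv)
  have sym: "\<And>u v. u \<bullet> (\<Omega> *v v) = (\<Omega> *v u) \<bullet> v" using sym_inner assms(1) by blast
  have Deq: "m *\<^sub>R D m - \<Omega> *v D m = b" if "invertible (mat m - \<Omega>)" for m
    using inv_app[OF that] Mv unfolding D_def by metis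
  have dual: "dual_obj \<Omega> x \<epsilon> m = -(1/2)*(b \<bullet> D m) - m*\<epsilon>\<^sup>2/2" for m
    unfolding dual_obj_def D_def b_def using sym by simp
  have key: "b \<bullet> D n - b \<bullet> D m = (m - n) * (D m \<bullet> D n)"
    if im: "invertible (mat m - \<Omega>)" and inn: "invertible (mat n - \<Omega>)" for m n
  proof -
    have e1: "b \<bullet> D n = m * (D m \<bullet> D n) - (\<Omega> *v D m) \<bullet> D n"
      using Deq[OF im] by (metis inner_diff_left inner_scaleR_left)
    have e2: "b \<bullet> D m = n * (D n \<bullet> D m) - (\<Omega> *v D n) \<bullet> D m"
      using Deq[OF inn] by (metis inner_diff_left inner_scaleR_left)
    have e3: "(\<Omega> *v D m) \<bullet> D n = (\<Omega> *v D n) \<bullet> D m" using sym by (metis inner_commute)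
    show ?thesis using e1 e2 e3 inner_commute[of "D m" "D n"] by (simp add: algebra_simps)
  qed
  let ?M = "mat \<mu>s - \<Omega>"
  have symM: "\<And>u v. u \<bullet> (?M *v v) = (?M *v u) \<bullet> v"
    using sym by (simp add: Mv inner_diff_left inner_diff_right inner_commute)
  have psdM: "\<And>v. 0 \<le> v \<bullet> (?M *v v)" using assms(4) unfolding psd_mat_def by blast
  obtain c where cp: "c > 0" and cb: "\<And>v. c * (v \<bullet> v) \<le> v \<bullet> (?M *v v)"
    using pd_bound[OF symM psdM assms(5)] by blast
  define Ds where "Ds = D \<mu>s"
  define K where "K = 2 * (Ds \<bullet> Ds) / c"
  have Kp: "K \<ge> 0" using cp by (simp add: K_def)
  have H: "\<exists>k. \<bar>k\<bar> \<le> K \<and> s * ((\<epsilon>\<^sup>2 - Ds \<bullet> Ds) - s * k) \<le> 0"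
    if s0: "s \<noteq> 0" and sc: "\<bar>s\<bar> \<le> c/2" for s
  proof -
    define \<nu> where "\<nu> = \<mu>s - s"
    have qb: "(c/2) * (v \<bullet> v) \<le> v \<bullet> ((mat \<nu> - \<Omega>) *v v)" for v
    proof -
      have "v \<bullet> ((mat \<nu> - \<Omega>) *v v) = v \<bullet> (?M *v v) - s * (v \<bullet> v)"
        unfolding Mv \<nu>_def by (simp add: algebra_simps inner_diff_right)
      moreover have "s * (v \<bullet> v) \<le> (c/2) * (v \<bullet> v)"
        using sc by (intro mult_right_mono) auto
      ultimately show ?thesis using cb[of v] by linarith
    qed
    have psdn: "psd_mat (mat \<nu> - \<Omega>)" unfolding psd_mat_def
      using qb cp by (meson order_trans mult_nonneg_nonneg inner_ge_zero less_imp_le half_gt_zero)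
    have invn: "invertible (mat \<nu> - \<Omega>)"
    proof (rule inj_invertible)
      fix v assume "(mat \<nu> - \<Omega>) *v v = 0"
      then have "(c/2) * (v \<bullet> v) \<le> 0" using qb[of v] by simp
      then have "v \<bullet> v \<le> 0" using cp by (simp add: mult_le_0_iff)
      then show "v = 0" by (metis inner_eq_zero_iff inner_ge_zero order_antisym)
    qed
    define u where "u = matrix_inv (mat \<nu> - \<Omega>) *v Ds"
    have Mu: "(mat \<nu> - \<Omega>) *v u = Ds" using inv_app[OF invn] u_def by simp
    have ub: "(c/2) * (u \<bullet> u) \<le> u \<bullet> Ds" using qb[of u] Mu by simp
    also have "\<dots> \<le> norm u * norm Ds" by (rule norm_cauchy_schwarz)
    finally have ub2: "(c/2) * (norm u * norm u) \<le> norm u * norm Ds"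
      by (simp add: dot_square_norm power2_eq_square)
    have nu: "norm u \<le> 2 * norm Ds / c"
    proof (cases "norm u = 0")
      case True then show ?thesis using cp by simp
    next
      case False
      then have "(c/2) * norm u \<le> norm Ds" using ub2
        by (metis mult.left_commute mult_le_cancel_left_pos norm_ge_zero order_le_less)
      then show ?thesis using cp by (simp add: field_simps)
    qed
    define k where "k = Ds \<bullet> u"
    have "\<bar>k\<bar> \<le> norm Ds * norm u" unfolding k_def by (rule Cauchy_Schwarz_ineq2)
    also have "\<dots> \<le> norm Ds * (2 * norm Ds / c)" using nu by (intro mult_left_mono) auto
    also have "\<dots> = K" unfolding K_def using cp by (simp add: dot_square_norm power2_eq_square)
    finally have kK: "\<bar>k\<bar> \<le> K" .
    have Dn: "D \<nu> = Ds + s *\<^sub>R u"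
    proof -
      have "(mat \<nu> - \<Omega>) *v (Ds + s *\<^sub>R u) = b"
      proof -
        have "(mat \<nu> - \<Omega>) *v (Ds + s *\<^sub>R u) = (mat \<nu> - \<Omega>) *v Ds + s *\<^sub>R Ds"
          using Mu by (simp add: matrix_vector_right_distrib matrix_vector_mult_scaleR)
        also have "(mat \<nu> - \<Omega>) *v Ds = (\<mu>s *\<^sub>R Ds - \<Omega> *v Ds) - s *\<^sub>R Ds"
          unfolding Mv \<nu>_def by (simp add: algebra_simps)
        finally show ?thesis using Deq[OF assms(5)] Ds_def by simp
      qed
      moreover have "(mat \<nu> - \<Omega>) *v D \<nu> = b" using inv_app[OF invn] D_def by simp
      ultimately show ?thesis using inj_matrix_vector_mult[OF invn] by (metis injD)
    qed
    have "b \<bullet> D \<nu> - b \<bullet> Ds = s * (Ds \<bullet> Ds + s * k)"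
      using key[OF assms(5) invn] Dn unfolding Ds_def k_def \<nu>_def
      by (simp add: inner_add_right algebra_simps)
    moreover have "dual_obj \<Omega> x \<epsilon> \<nu> \<le> dual_obj \<Omega> x \<epsilon> \<mu>s" using assms(6) psdn invn by blast
    ultimately have A: "b \<bullet> D \<nu> - b \<bullet> Ds = s * (Ds \<bullet> Ds + s * k)"
      "-(1/2)*(b \<bullet> D \<nu>) - \<nu>*\<epsilon>\<^sup>2/2 \<le> -(1/2)*(b \<bullet> Ds) - \<mu>s*\<epsilon>\<^sup>2/2"
      unfolding dual Ds_def by auto
    have "\<nu>*\<epsilon>\<^sup>2 = \<mu>s*\<epsilon>\<^sup>2 - s*\<epsilon>\<^sup>2" by (simp add: \<nu>_def algebra_simps)
    then have "s * (Ds \<bullet> Ds + s * k) \<ge> s*\<epsilon>\<^sup>2" using A by linarith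
    then have "s * ((\<epsilon>\<^sup>2 - Ds \<bullet> Ds) - s * k) \<le> 0" by (simp add: algebra_simps)
    then show ?thesis using kK by blast
  qed
  have E0: "\<epsilon>\<^sup>2 - Ds \<bullet> Ds = 0"
    by (rule real_zero[of "c/2" K]) (use cp Kp H in auto)
  have nDs: "norm Ds = \<epsilon>"
  proof -
    have "(norm Ds)^2 = \<epsilon>^2" using E0 by (simp add: dot_square_norm)
    then show ?thesis using assms(3) by (simp add: power2_eq_iff_nonneg)
  qed
  obtain i :: 'p where True by blast
  define e :: "real^'p" where "e = axis i 1"
  have "e \<noteq> 0" by (simp add: e_def)
  then have "0 < e \<bullet> (\<Omega> *v e)" using assms(2) unfolding pd_mat_def by blast
  moreover have "0 \<le> e \<bullet> (?M *v e)" using psdM by blast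
  moreover have "e \<bullet> e = 1" by (simp add: e_def)
  ultimately have mup: "\<mu>s \<ge> 0" by (simp add: Mv inner_diff_right)
  have DsEq: "\<mu>s *\<^sub>R Ds - \<Omega> *v Ds = b" using Deq[OF assms(5)] Ds_def by simp
  have main: "quad_obj \<Omega> x \<Delta> \<le> quad_obj \<Omega> x Ds" if nD: "norm \<Delta> \<le> \<epsilon>" for \<Delta>
  proof -
    define d where "d = \<Delta> - Ds"
    define y where "y = x + Ds"
    have xD: "x + \<Delta> = y + d" by (simp add: y_def d_def)
    have Oy: "\<Omega> *v y = \<mu>s *\<^sub>R Ds"
      using DsEq unfolding y_def b_def by (simp add: matrix_vector_right_distrib algebra_simps)
    have sdy: "y \<bullet> (\<Omega> *v d) = d \<bullet> (\<Omega> *v y)" using sym inner_commute by metis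
    have q1: "quad_obj \<Omega> x \<Delta> = quad_obj \<Omega> x Ds + 2 * \<mu>s * (d \<bullet> Ds) + d \<bullet> (\<Omega> *v d)"
    proof -
      have "quad_obj \<Omega> x \<Delta> = y \<bullet> (\<Omega> *v y) + y \<bullet> (\<Omega> *v d) + d \<bullet> (\<Omega> *v y) + d \<bullet> (\<Omega> *v d)"
        unfolding quad_obj_def xD by (simp add: matrix_vector_right_distrib inner_add_left inner_add_right)
      moreover have "quad_obj \<Omega> x Ds = y \<bullet> (\<Omega> *v y)" unfolding quad_obj_def y_def ..
      ultimately show ?thesis unfolding sdy Oy by simp
    qed
    have pd: "d \<bullet> (\<Omega> *v d) \<le> \<mu>s * (d \<bullet> d)"
      using psdM[of d] by (simp add: Mv inner_diff_right)
    have nn: "\<Delta> \<bullet> \<Delta> = Ds \<bullet> Ds + 2 * (d \<bullet> Ds) + d \<bullet> d"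
      unfolding d_def by (simp add: inner_diff_left inner_diff_right inner_commute)
    have "\<Delta> \<bullet> \<Delta> \<le> Ds \<bullet> Ds"
    proof -
      have "\<Delta> \<bullet> \<Delta> = (norm \<Delta>)^2" by (simp add: dot_square_norm)
      also have "\<dots> \<le> \<epsilon>^2" using nD by (simp add: power_mono)
      finally show ?thesis using E0 by simp
    qed
    then have "\<mu>s * (2 * (d \<bullet> Ds) + d \<bullet> d) \<le> 0" using nn mup by (simp add: mult_nonneg_nonpos)
    then show ?thesis using q1 pd by (simp add: algebra_simps)
  qed
  show ?thesis using nDs main unfolding Ds_def D_def b_def by simp
qed

end
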